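(* Assume $l=-\infty$, $r=\infty$, and that there exists $y_0\in I$ with $G_{y_0}(a)<\infty$ for all $a>0$. Then for every $y\in I$, $G_y$ is a bijection from $[0,\infty)$ onto $[0,\infty)$.
   Context: Let $-\infty\le l<r\le\infty$, $I=(l,r)$, $\eta\colon\mathbb R\to\mathbb R$ Borel with $\eta\ne0$ on $I$, $1/\eta^2\in L^1_{\mathrm{loc}}(I)$, $\eta=0$ off $I$. For $y\in I$, $x\in\mathbb R$, $q(y,x)=\int_y^x\int_y^u\frac{2}{\eta^2(z)}\,dz\,du\in[0,\infty]$. Let $\mu\ne\delta_0$ be a centered probability measure on $\mathbb R$ with finite first moment. For $y\in I$, $a\ge0$, $G_y(a)=\int_{\mathbb R} q(y,y+ax)\,\mu(dx)\in[0,\infty]$. *)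

theory Defs
  imports "HOL-Probability.Probability"
begin

text \<open>The scale function q(y,x) = int_y^x int_y^u 2/eta(z)^2 dz du in [0,infinity].
  For x < y both orientations flip, so the value is the nonnegative
  integral over the unoriented intervals.\<close>
definition qfun :: "(real \<Rightarrow> real) \<Rightarrow> real \<Rightarrow> real \<Rightarrow> ennreal" where
  "qfun \<eta> y x =
     (\<integral>\<^sup>+ u \<in> {min y x..max y x}.
        (\<integral>\<^sup>+ z \<in> {min y u..max y u}. ennreal (2 / (\<eta> z)\<^sup>2) \<partial>lborel) \<partial>lborel)"

definition Gfun :: "(real \<Rightarrow> real) \<Rightarrow> real measure \<Rightarrow> real \<Rightarrow> real \<Rightarrow> ennreal" where
  "Gfun \<eta> \<mu> y a = (\<integral>\<^sup>+ x. qfun \<eta> y (y + a * x) \<partial>\<mu>)"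

end

theory Submission
  imports Defs
begin


definition Dq :: "(real \<Rightarrow> real) \<Rightarrow> (real \<Rightarrow> real) \<Rightarrow> real \<Rightarrow> real \<Rightarrow> real" where
  "Dq Q H y x = Q x - Q y - H y * (x - y)"

lemma Dq_deriv:
  assumes QH: "\<And>t. (Q has_real_derivative H t) (at t)"
  shows "(Dq Q H y has_real_derivative (H x - H y)) (at x)"
  unfolding Dq_def
  by (auto intro!: derivative_eq_intros QH)

lemma Dq_convex:
  assumes QH: "\<And>t. (Q has_real_derivative H t) (at t)"
  and Hmono: "\<And>s t. s < t \<Longrightarrow> H s < H t"
  shows "convex_on UNIV (Dq Q H y)"
proof (rule convex_on_realI[where f'="\<lambda>x. H x - H y"])
  show "connected (UNIV::real set)" by simp
  show "\<And>x. x \<in> UNIV \<Longrightarrow> (Dq Q H y has_real_derivative H x - H y) (at x)"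
    using Dq_deriv[OF QH] by blast
  show "\<And>x z. x \<in> UNIV \<Longrightarrow> z \<in> UNIV \<Longrightarrow> x \<le> z \<Longrightarrow> H x - H y \<le> H z - H y"
    using Hmono by (metis diff_right_mono order_le_less order_refl)
qed

lemma psi_strict:
  assumes QH: "\<And>t. (Q has_real_derivative H t) (at t)"
  and Hmono: "\<And>s t. s < t \<Longrightarrow> H s < H t"
  and ab: "0 \<le> a" "a < b" and x: "x \<noteq> 0"
  shows "Dq Q H y (y + a * x) < Dq Q H y (y + b * x)"
proof -
  have der: "\<And>s. ((\<lambda>s. Dq Q H y (y + s * x)) has_real_derivative (H (y + s*x) - H y) * x) (at s)"
    by (rule DERIV_chain2[OF Dq_deriv[OF QH]]) (auto intro!: derivative_eq_intros)
  obtain z where z: "a < z" "z < b"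
    "Dq Q H y (y + b * x) - Dq Q H y (y + a * x) = (b - a) * ((H (y + z*x) - H y) * x)"
    using MVT2[OF ab(2), of "\<lambda>s. Dq Q H y (y + s * x)" "\<lambda>s. (H (y + s*x) - H y) * x"] der by blast
  have "0 < (H (y + z*x) - H y) * x"
  proof (cases "x > 0")
    case True
    then have "y < y + z*x" using z ab by simp
    then show ?thesis using Hmono True by (simp add: mult_pos_pos)
  next
    case False
    then have "x < 0" using x by simp
    then have "y + z*x < y" using z ab by (simp add: mult_pos_neg)
    then show ?thesis using Hmono \<open>x < 0\<close> by (simp add: mult_neg_neg)
  qed
  then show ?thesis using z ab by (smt (verit) mult_pos_pos)
qed

lemma psi_mono:
  assumes QH: "\<And>t. (Q has_real_derivative H t) (at t)"
  and Hmono: "\<And>s t. s < t \<Longrightarrow> H s < H t"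
  and ab: "0 \<le> a" "a \<le> b"
  shows "Dq Q H y (y + a * x) \<le> Dq Q H y (y + b * x)"
  using psi_strict[OF QH Hmono, of a b x y] ab
  by (cases "x = 0 \<or> a = b") (auto simp: Dq_def)

lemma Dq_nonneg:
  assumes QH: "\<And>t. (Q has_real_derivative H t) (at t)"
  and Hmono: "\<And>s t. s < t \<Longrightarrow> H s < H t"
  shows "0 \<le> Dq Q H y x"
  using psi_mono[OF QH Hmono, of 0 1 y "x - y"] by (simp add: Dq_def)

lemma Dq_cont:
  assumes QH: "\<And>t. (Q has_real_derivative H t) (at t)"
  shows "continuous_on UNIV (\<lambda>x. Dq Q H y (y + a * x))"
proof -
  have "\<And>x. isCont (\<lambda>x. Dq Q H y (y + a * x)) x"
    by (rule DERIV_isCont, rule DERIV_chain2[OF Dq_deriv[OF QH]]) (auto intro!: derivative_eq_intros)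
  then show ?thesis by (simp add: continuous_on_eq_continuous_at)
qed

definition Gq :: "(real \<Rightarrow> real) \<Rightarrow> (real \<Rightarrow> real) \<Rightarrow> real measure \<Rightarrow> real \<Rightarrow> real \<Rightarrow> ennreal" where
  "Gq Q H \<mu> y a = (\<integral>\<^sup>+x. ennreal (Dq Q H y (y + a * x)) \<partial>\<mu>)"

lemma Dq_meas:
  assumes QH: "\<And>t. (Q has_real_derivative H t) (at t)"
  and mu_sets: "sets \<mu> = sets borel"
  shows "(\<lambda>x. ennreal (Dq Q H y (y + a * x))) \<in> borel_measurable \<mu>"
proof -
  have "(\<lambda>x. Dq Q H y (y + a * x)) \<in> borel_measurable borel"
    by (rule borel_measurable_continuous_onI[OF Dq_cont[OF QH]])
  then have "(\<lambda>x. ennreal (Dq Q H y (y + a * x))) \<in> borel_measurable borel" by measurable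
  then show ?thesis using measurable_cong_sets[OF mu_sets refl] by blast
qed

lemma Gq0: "Gq Q H \<mu> y 0 = 0"
  by (simp add: Gq_def Dq_def)

lemma dirac_lemma:
  assumes mu_prob: "prob_space \<mu>" and mu_sets: "sets \<mu> = sets borel"
  and ae: "AE x in \<mu>. x = (0::real)"
  shows "\<mu> = return borel 0"
proof (rule measure_eqI)
  show "sets \<mu> = sets (return borel 0)" using mu_sets by simp
  fix A assume A: "A \<in> sets \<mu>"
  have "emeasure \<mu> A = (\<integral>\<^sup>+x. indicator A x \<partial>\<mu>)" using A by simp
  also have "\<dots> = (\<integral>\<^sup>+x. indicator A (0::real) \<partial>\<mu>)"
    by (rule nn_integral_cong_AE) (use ae in auto)
  also have "\<dots> = indicator A (0::real)"
    using prob_space.emeasure_space_1[OF mu_prob] by simp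
  also have "\<dots> = emeasure (return borel 0) A" using A mu_sets by simp
  finally show "emeasure \<mu> A = emeasure (return borel 0) A" .
qed

lemma Gq_finite:
  assumes QH: "\<And>t. (Q has_real_derivative H t) (at t)"
  and Hmono: "\<And>s t. s < t \<Longrightarrow> H s < H t"
  and mu_prob: "prob_space \<mu>" and mu_sets: "sets \<mu> = sets borel"
  and mu_int: "integrable \<mu> (\<lambda>x. x)"
  and y0: "\<forall>a>0. Gq Q H \<mu> y0 a < \<infinity>"
  and a: "0 \<le> a"
  shows "Gq Q H \<mu> y a < \<infinity>"
proof (cases "a = 0")
  case True then show ?thesis by (simp add: Gq0)
next
  case False
  with a have a: "a > 0" by simp
  define C where "C = Dq Q H y0 (2*y - y0) / 2"
  define K where "K = \<bar>H y0 - H y\<bar> * a"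
  have C: "0 \<le> C" using Dq_nonneg[OF QH Hmono] by (simp add: C_def)
  have K: "0 \<le> K" using a by (simp add: K_def)
  have cvx: "convex_on UNIV (Dq Q H y0)" by (rule Dq_convex[OF QH Hmono])
  have pt: "Dq Q H y (y + a * x) \<le> Dq Q H y0 (y0 + (2*a) * x) / 2 + (C + K * \<bar>x\<bar>)" for x
  proof -
    have e1: "Dq Q H y (y + a*x) = Dq Q H y0 (y + a*x) - Dq Q H y0 y + (H y0 - H y) * (a*x)"
      by (simp add: Dq_def algebra_simps)
    have "Dq Q H y0 y \<ge> 0" by (rule Dq_nonneg[OF QH Hmono])
    have "(H y0 - H y) * (a*x) \<le> K * \<bar>x\<bar>"
    proof -
      have "(H y0 - H y) * (a*x) \<le> \<bar>(H y0 - H y) * (a*x)\<bar>" by (rule abs_ge_self)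
      also have "\<dots> = K * \<bar>x\<bar>" using a by (simp add: K_def abs_mult)
      finally show ?thesis .
    qed
    have "Dq Q H y0 ((1 - 1/2) *\<^sub>R (y0 + (2*a) * x) + (1/2) *\<^sub>R (2*y - y0))
       \<le> (1 - 1/2) * Dq Q H y0 (y0 + (2*a) * x) + (1/2) * Dq Q H y0 (2*y - y0)"
      by (rule convex_onD[OF cvx]) auto
    moreover have "(1 - 1/2) *\<^sub>R (y0 + (2*a) * x) + (1/2) *\<^sub>R (2*y - y0) = y + a*x"
      by (simp add: algebra_simps)
    ultimately have "Dq Q H y0 (y + a*x) \<le> Dq Q H y0 (y0 + (2*a) * x) / 2 + C"
      by (simp add: C_def)
    then show ?thesis using e1 \<open>Dq Q H y0 y \<ge> 0\<close> \<open>(H y0 - H y) * (a*x) \<le> K * \<bar>x\<bar>\<close> by linarith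
  qed
  have m1: "(\<lambda>x. ennreal (Dq Q H y0 (y0 + (2*a) * x) / 2)) \<in> borel_measurable \<mu>"
  proof -
    have "(\<lambda>x. Dq Q H y0 (y0 + (2*a) * x)) \<in> borel_measurable borel"
      by (rule borel_measurable_continuous_onI[OF Dq_cont[OF QH]])
    then have "(\<lambda>x. ennreal (Dq Q H y0 (y0 + (2*a) * x) / 2)) \<in> borel_measurable borel" by measurable
    then show ?thesis using measurable_cong_sets[OF mu_sets refl] by blast
  qed
  have m2: "(\<lambda>x. ennreal (C + K * \<bar>x\<bar>)) \<in> borel_measurable \<mu>"
  proof -
    have "(\<lambda>x::real. ennreal (C + K * \<bar>x\<bar>)) \<in> borel_measurable borel" by measurable
    then show ?thesis using measurable_cong_sets[OF mu_sets refl] by blast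
  qed
  have "Gq Q H \<mu> y a \<le> (\<integral>\<^sup>+x. ennreal (Dq Q H y0 (y0 + (2*a) * x) / 2) + ennreal (C + K * \<bar>x\<bar>) \<partial>\<mu>)"
    unfolding Gq_def
    by (rule nn_integral_mono) (use pt C K Dq_nonneg[OF QH Hmono] in \<open>auto simp: ennreal_plus[symmetric] simp del: ennreal_plus\<close>)
  also have "\<dots> = (\<integral>\<^sup>+x. ennreal (Dq Q H y0 (y0 + (2*a) * x) / 2) \<partial>\<mu>) + (\<integral>\<^sup>+x. ennreal (C + K * \<bar>x\<bar>) \<partial>\<mu>)"
    by (rule nn_integral_add[OF m1 m2])
  also have "\<dots> < \<infinity>"
  proof -
    have "(\<integral>\<^sup>+x. ennreal (Dq Q H y0 (y0 + (2*a) * x) / 2) \<partial>\<mu>) = (\<integral>\<^sup>+x. ennreal (1/2) * ennreal (Dq Q H y0 (y0 + (2*a) * x)) \<partial>\<mu>)"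
    proof (rule nn_integral_cong)
      fix x
      have "ennreal (1/2 * Dq Q H y0 (y0 + (2*a) * x)) = ennreal (1/2) * ennreal (Dq Q H y0 (y0 + (2*a) * x))"
        by (rule ennreal_mult) (auto intro: Dq_nonneg[OF QH Hmono])
      then show "ennreal (Dq Q H y0 (y0 + (2*a) * x) / 2) = ennreal (1/2) * ennreal (Dq Q H y0 (y0 + (2*a) * x))"
        by simp
    qed
    also have "\<dots> = ennreal (1/2) * Gq Q H \<mu> y0 (2*a)"
      unfolding Gq_def by (rule nn_integral_cmult[OF Dq_meas[OF QH mu_sets]])
    also have "\<dots> < \<infinity>"
    proof -
      have "Gq Q H \<mu> y0 (2*a) < \<infinity>" using y0 a by simp
      then show ?thesis by (metis ennreal_less_top ennreal_mult_less_top infinity_ennreal_def)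
    qed
    finally have f1: "(\<integral>\<^sup>+x. ennreal (Dq Q H y0 (y0 + (2*a) * x) / 2) \<partial>\<mu>) < \<infinity>" .
    have "(\<integral>\<^sup>+x. ennreal (C + K * \<bar>x\<bar>) \<partial>\<mu>) = (\<integral>\<^sup>+x. ennreal C + ennreal K * ennreal (norm x) \<partial>\<mu>)"
      by (rule nn_integral_cong) (simp add: C K ennreal_plus ennreal_mult)
    also have "\<dots> = (\<integral>\<^sup>+x. ennreal C \<partial>\<mu>) + (\<integral>\<^sup>+x. ennreal K * ennreal (norm x) \<partial>\<mu>)"
    proof (rule nn_integral_add)
      have "(\<lambda>x::real. ennreal K * ennreal (norm x)) \<in> borel_measurable borel" by measurable
      then show "(\<lambda>x::real. ennreal K * ennreal (norm x)) \<in> borel_measurable \<mu>"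
        using measurable_cong_sets[OF mu_sets refl] by blast
    qed simp
    also have "\<dots> = ennreal C + ennreal K * (\<integral>\<^sup>+x. ennreal (norm x) \<partial>\<mu>)"
      using prob_space.emeasure_space_1[OF mu_prob]
      by (simp add: nn_integral_cmult measurable_cong_sets[OF mu_sets refl])
    also have "\<dots> < \<infinity>"
      using mu_int unfolding integrable_iff_bounded by (simp add: ennreal_mult_less_top)
    finally show ?thesis using f1 by simp
  qed
  finally show ?thesis .
qed


lemma Gq_conv:
  assumes QH: "\<And>t. (Q has_real_derivative H t) (at t)"
  and Hmono: "\<And>s t. s < t \<Longrightarrow> H s < H t"
  and mu_sets: "sets \<mu> = sets borel"
  and t: "0 \<le> t" "t \<le> 1"
  shows "Gq Q H \<mu> y ((1-t)*a + t*b) \<le> ennreal (1-t) * Gq Q H \<mu> y a + ennreal t * Gq Q H \<mu> y b"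
proof -
  have cvx: "convex_on UNIV (Dq Q H y)" by (rule Dq_convex[OF QH Hmono])
  have pt: "ennreal (Dq Q H y (y + ((1-t)*a + t*b) * x)) \<le>
      ennreal (1-t) * ennreal (Dq Q H y (y + a * x)) + ennreal t * ennreal (Dq Q H y (y + b * x))" for x
  proof -
    have "Dq Q H y ((1 - t) *\<^sub>R (y + a * x) + t *\<^sub>R (y + b * x))
       \<le> (1 - t) * Dq Q H y (y + a * x) + t * Dq Q H y (y + b * x)"
      by (rule convex_onD[OF cvx]) (use t in auto)
    moreover have "(1 - t) *\<^sub>R (y + a * x) + t *\<^sub>R (y + b * x) = y + ((1-t)*a + t*b) * x"
      by (simp add: algebra_simps)
    ultimately have le: "Dq Q H y (y + ((1-t)*a + t*b) * x) \<le> (1 - t) * Dq Q H y (y + a * x) + t * Dq Q H y (y + b * x)"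
      by simp
    have n1: "0 \<le> Dq Q H y (y + a * x)" "0 \<le> Dq Q H y (y + b * x)" by (auto intro: Dq_nonneg[OF QH Hmono])
    have "ennreal (Dq Q H y (y + ((1-t)*a + t*b) * x)) \<le> ennreal ((1 - t) * Dq Q H y (y + a * x) + t * Dq Q H y (y + b * x))"
      using le by (rule ennreal_leI)
    also have "\<dots> = ennreal (1-t) * ennreal (Dq Q H y (y + a * x)) + ennreal t * ennreal (Dq Q H y (y + b * x))"
      using n1 t by (simp add: ennreal_plus ennreal_mult)
    finally show ?thesis .
  qed
  have "Gq Q H \<mu> y ((1-t)*a + t*b) \<le> (\<integral>\<^sup>+x. ennreal (1-t) * ennreal (Dq Q H y (y + a * x)) + ennreal t * ennreal (Dq Q H y (y + b * x)) \<partial>\<mu>)"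
    unfolding Gq_def by (rule nn_integral_mono) (rule pt)
  also have "\<dots> = (\<integral>\<^sup>+x. ennreal (1-t) * ennreal (Dq Q H y (y + a * x)) \<partial>\<mu>) + (\<integral>\<^sup>+x. ennreal t * ennreal (Dq Q H y (y + b * x)) \<partial>\<mu>)"
    by (rule nn_integral_add) (auto intro!: borel_measurable_times_ennreal Dq_meas[OF QH mu_sets])
  also have "\<dots> = ennreal (1-t) * Gq Q H \<mu> y a + ennreal t * Gq Q H \<mu> y b"
    unfolding Gq_def by (simp add: nn_integral_cmult Dq_meas[OF QH mu_sets])
  finally show ?thesis .
qed

lemma Gq_strict:
  assumes QH: "\<And>t. (Q has_real_derivative H t) (at t)"
  and Hmono: "\<And>s t. s < t \<Longrightarrow> H s < H t"
  and mu_prob: "prob_space \<mu>" and mu_sets: "sets \<mu> = sets borel"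
  and mu_nondirac: "\<mu> \<noteq> return borel 0"
  and fin: "Gq Q H \<mu> y a < \<infinity>"
  and ab: "0 \<le> a" "a < b"
  shows "Gq Q H \<mu> y a < Gq Q H \<mu> y b"
  unfolding Gq_def
proof (rule nn_integral_less)
  show "(\<lambda>x. ennreal (Dq Q H y (y + a * x))) \<in> borel_measurable \<mu>"
       "(\<lambda>x. ennreal (Dq Q H y (y + b * x))) \<in> borel_measurable \<mu>"
    by (auto intro!: Dq_meas[OF QH mu_sets])
  show "(\<integral>\<^sup>+ x. ennreal (Dq Q H y (y + a * x)) \<partial>\<mu>) \<noteq> \<infinity>" using fin by (simp add: Gq_def)
  show "AE x in \<mu>. ennreal (Dq Q H y (y + a * x)) \<le> ennreal (Dq Q H y (y + b * x))"
    using psi_mono[OF QH Hmono] ab by (auto intro!: ennreal_leI)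
  show "\<not> (AE x in \<mu>. ennreal (Dq Q H y (y + b * x)) \<le> ennreal (Dq Q H y (y + a * x)))"
  proof
    assume "AE x in \<mu>. ennreal (Dq Q H y (y + b * x)) \<le> ennreal (Dq Q H y (y + a * x))"
    then have "AE x in \<mu>. x = (0::real)"
    proof (rule eventually_mono)
      fix x assume le: "ennreal (Dq Q H y (y + b * x)) \<le> ennreal (Dq Q H y (y + a * x))"
      show "x = 0"
      proof (rule ccontr)
        assume "x \<noteq> 0"
        then have "Dq Q H y (y + a * x) < Dq Q H y (y + b * x)" using psi_strict[OF QH Hmono] ab by blast
        moreover have "0 \<le> Dq Q H y (y + a * x)" by (rule Dq_nonneg[OF QH Hmono])
        ultimately show False using le by (simp add: ennreal_le_iff2) 
      qed
    qed
    then show False using dirac_lemma[OF mu_prob mu_sets] mu_nondirac by blast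
  qed
qed


lemma Gq_bij:
  assumes QH: "\<And>t. (Q has_real_derivative H t) (at t)"
  and Hmono: "\<And>s t. s < t \<Longrightarrow> H s < H t"
  and mu_prob: "prob_space \<mu>" and mu_sets: "sets \<mu> = sets borel"
  and mu_int: "integrable \<mu> (\<lambda>x. x)"
  and mu_nondirac: "\<mu> \<noteq> return borel 0"
  and y0: "\<forall>a>0. Gq Q H \<mu> y0 a < \<infinity>"
  shows "bij_betw (Gq Q H \<mu> y) {0..} {x. x < \<infinity>}"
proof -
  let ?G = "Gq Q H \<mu> y"
  have fin: "\<And>a. 0 \<le> a \<Longrightarrow> ?G a < \<infinity>"
    using Gq_finite[OF QH Hmono mu_prob mu_sets mu_int y0] by blast
  define g where "g a = enn2real (?G a)" for a
  have Gg: "\<And>a. 0 \<le> a \<Longrightarrow> ?G a = ennreal (g a)"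
    using fin by (simp add: g_def)
  have g0: "g 0 = 0" by (simp add: g_def Gq0)
  have gnn: "\<And>a. 0 \<le> g a" by (simp add: g_def)
  have gstrict: "\<And>a b. 0 \<le> a \<Longrightarrow> a < b \<Longrightarrow> g a < g b"
  proof -
    fix a b :: real assume ab: "0 \<le> a" "a < b"
    have "?G a < ?G b" by (rule Gq_strict[OF QH Hmono mu_prob mu_sets mu_nondirac fin[OF ab(1)] ab])
    then show "g a < g b" using Gg[of a] Gg[of b] ab gnn[of a] by (simp add: ennreal_less_iff)
  qed
  have gconv: "\<And>a b t. 0 \<le> a \<Longrightarrow> 0 \<le> b \<Longrightarrow> 0 \<le> t \<Longrightarrow> t \<le> 1 \<Longrightarrow>
      g ((1-t)*a + t*b) \<le> (1-t) * g a + t * g b"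
  proof -
    fix a b t :: real assume h: "0 \<le> a" "0 \<le> b" "0 \<le> t" "t \<le> 1"
    have nn: "0 \<le> (1-t)*a + t*b" using h by simp
    have "ennreal (g ((1-t)*a + t*b)) = ?G ((1-t)*a + t*b)" using Gg[OF nn] by simp
    also have "\<dots> \<le> ennreal (1-t) * ?G a + ennreal t * ?G b"
      by (rule Gq_conv[OF QH Hmono mu_sets h(3,4)])
    also have "\<dots> = ennreal ((1-t) * g a + t * g b)"
      using Gg[OF h(1)] Gg[OF h(2)] h gnn[of a] gnn[of b] by (simp add: ennreal_plus ennreal_mult)
    finally have X: "ennreal (g ((1-t)*a + t*b)) \<le> ennreal ((1-t) * g a + t * g b)" .
    have nn2: "0 \<le> (1-t) * g a + t * g b" using h gnn[of a] gnn[of b] by simp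
    show "g ((1-t)*a + t*b) \<le> (1-t) * g a + t * g b"
      using iffD1[OF ennreal_le_iff[OF nn2] X] .
  qed
  have cvx: "convex_on {0<..} g"
  proof (rule convex_onI)
    fix t x z :: real assume "0 < t" "t < 1" "x \<in> {0<..}" "z \<in> {0<..}"
    then show "g ((1 - t) *\<^sub>R x + t *\<^sub>R z) \<le> (1 - t) * g x + t * g z"
      using gconv[of x z t] by simp
  qed (simp add: convex_real_interval)
  have cont: "continuous_on {0<..} g"
    by (rule convex_on_continuous[OF _ cvx]) simp
  have lin: "\<And>a. 0 \<le> a \<Longrightarrow> a \<le> 1 \<Longrightarrow> g a \<le> a * g 1"
  proof -
    fix a :: real assume a: "0 \<le> a" "a \<le> 1"
    have "g ((1-a)*0 + a*1) \<le> (1-a) * g 0 + a * g 1" by (rule gconv) (use a in auto)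
    then show "g a \<le> a * g 1" using g0 by simp
  qed
  have grow: "\<And>A. 1 \<le> A \<Longrightarrow> A * g 1 \<le> g A"
  proof -
    fix A :: real assume A: "1 \<le> A"
    have "g ((1 - 1/A) * 0 + (1/A) * A) \<le> (1 - 1/A) * g 0 + (1/A) * g A"
      by (rule gconv) (use A in auto)
    then have "g 1 \<le> g A / A" using A g0 by simp
    then show "A * g 1 \<le> g A" using A by (simp add: field_simps)
  qed
  have surj: "\<And>t. 0 \<le> t \<Longrightarrow> \<exists>a\<ge>0. g a = t"
  proof -
    fix t :: real assume t: "0 \<le> t"
    show "\<exists>a\<ge>0. g a = t"
    proof (cases "t = 0")
      case True then show ?thesis using g0 by auto
    next
      case False
      then have t: "0 < t" using t by simp
      have g1: "0 < g 1" using gstrict[of 0 1] g0 by simp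
      define e where "e = min 1 (t / (2 * g 1))"
      define A where "A = max 1 (t / g 1 + 1)"
      have e: "0 < e" "e \<le> 1" using t g1 by (auto simp: e_def)
      have A: "1 \<le> A" by (simp add: A_def)
      have "g e \<le> e * g 1" using lin e by simp
      also have "\<dots> \<le> t / (2 * g 1) * g 1" using g1 by (intro mult_right_mono) (auto simp: e_def)
      also have "\<dots> \<le> t" using g1 t by simp
      finally have ge: "g e \<le> t" .
      have "t \<le> (t / g 1 + 1) * g 1" using g1 by (simp add: field_simps)
      also have "\<dots> \<le> A * g 1" using g1 by (intro mult_right_mono) (auto simp: A_def)
      also have "\<dots> \<le> g A" using grow[OF A] .
      finally have gA: "t \<le> g A" .
      have "continuous_on {e..A} g"
        by (rule continuous_on_subset[OF cont]) (use e in auto)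
      moreover have "e \<le> A" using e A by linarith
      ultimately obtain a where "e \<le> a" "a \<le> A" "g a = t"
        using IVT'[of g e t A, OF ge gA] by blast
      then show ?thesis using e by (intro exI[of _ a]) auto
    qed
  qed
  show ?thesis
    unfolding bij_betw_def
  proof (intro conjI)
    show "inj_on ?G {0..}"
    proof (rule inj_onI)
      fix a b :: real assume ab: "a \<in> {0..}" "b \<in> {0..}" "?G a = ?G b"
      then have "g a = g b" using Gg[of a] Gg[of b] gnn[of a] gnn[of b] by simp
      show "a = b"
      proof (rule ccontr)
        assume "a \<noteq> b"
        then have "a < b \<or> b < a" by linarith
        then show False using gstrict[of a b] gstrict[of b a] ab \<open>g a = g b\<close> by auto
      qed
    qed
    show "?G ` {0..} = {x. x < \<infinity>}"
    proof
      show "?G ` {0..} \<subseteq> {x. x < \<infinity>}" using fin by auto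
      show "{x. x < \<infinity>} \<subseteq> ?G ` {0..}"
      proof
        fix x :: ennreal assume "x \<in> {x. x < \<infinity>}"
        then obtain r where r: "0 \<le> r" "x = ennreal r" by (cases x) auto
        obtain a where "0 \<le> a" "g a = r" using surj[OF r(1)] by blast
        then show "x \<in> ?G ` {0..}" using Gg r by (intro image_eqI[of _ _ a]) auto
      qed
    qed
  qed
qed



lemma nnI:
  fixes g :: "real \<Rightarrow> real"
  assumes int: "g integrable_on {a..b}" and nn: "\<And>z. z \<in> {a..b} \<Longrightarrow> 0 \<le> g z"
  shows "(\<integral>\<^sup>+ z\<in>{a..b}. ennreal (g z) \<partial>lborel) = ennreal (integral {a..b} g)"
proof -
  have "(\<integral>\<^sup>+ z\<in>{a..b}. ennreal (g z) \<partial>lborel) = (\<integral>\<^sup>+ z. ennreal (indicator {a..b} z * g z) \<partial>lborel)"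
    by (rule nn_integral_cong) (auto split: split_indicator)
  also have "\<dots> = ennreal (integral {a..b} g)"
    by (rule nn_integral_has_integral_lebesgue[OF nn integrable_integral[OF int]])
  finally show ?thesis .
qed

lemma h_int:
  fixes \<eta> :: "real \<Rightarrow> real"
  assumes eta_loc: "\<And>a b. set_integrable lborel {a..b} (\<lambda>z. 1 / (\<eta> z)\<^sup>2)"
  shows "(\<lambda>z. 2 / (\<eta> z)\<^sup>2) integrable_on {a..b}"
proof -
  have "(\<lambda>z. 1 / (\<eta> z)\<^sup>2) integrable_on {a..b}"
    by (rule set_borel_integral_eq_integral(1)[OF eta_loc])
  then have "(\<lambda>z. 2 *\<^sub>R (1 / (\<eta> z)\<^sup>2)) integrable_on {a..b}" by (rule integrable_cmul)
  then show ?thesis by simp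
qed

lemma H_diff:
  fixes h :: "real \<Rightarrow> real"
  assumes int: "\<And>a b. h integrable_on {a..b}"
  defines "H \<equiv> \<lambda>t. if 0 \<le> t then integral {0..t} h else - integral {t..0} h"
  assumes ab: "a \<le> b"
  shows "H b - H a = integral {a..b} h"
proof -
  consider "0 \<le> a" | "a < 0" "0 \<le> b" | "b < 0" using ab by linarith
  then show ?thesis
  proof cases
    case 1
    then show ?thesis using Henstock_Kurzweil_Integration.integral_combine[where a=0 and c=a and b=b and f=h, OF 1 ab int] ab by (simp add: H_def)
  next
    case 2
    then show ?thesis using Henstock_Kurzweil_Integration.integral_combine[where a=a and c=0 and b=b and f=h, OF _ 2(2) int] by (simp add: H_def)
  next
    case 3
    then show ?thesis using Henstock_Kurzweil_Integration.integral_combine[where a=a and c=b and b=0 and f=h, OF ab _ int] ab by (simp add: H_def)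
  qed
qed


lemma int_pos:
  fixes h :: "real \<Rightarrow> real"
  assumes hm: "h \<in> borel_measurable borel" and hp: "\<And>z. 0 < h z"
  and int: "h integrable_on {a..b}" and ab: "a < b"
  shows "0 < integral {a..b} h"
proof (rule ccontr)
  have [measurable]: "h \<in> borel_measurable borel" by (rule hm)
  assume "\<not> 0 < integral {a..b} h"
  then have "ennreal (integral {a..b} h) = 0" by (simp add: ennreal_eq_0_iff)
  then have "(\<integral>\<^sup>+ z. ennreal (h z) * indicator {a..b} z \<partial>lborel) = 0"
    using nnI[OF int, of] hp by (simp add: less_imp_le)
  then have "AE z in lborel. ennreal (h z) * indicator {a..b} z = 0"
    by (subst (asm) nn_integral_0_iff_AE) auto
  then have "AE z in lborel. z \<notin> {a..b}"
  proof (rule eventually_mono)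
    fix z assume z: "ennreal (h z) * indicator {a..b} z = 0"
    show "z \<notin> {a..b}"
    proof
      assume "z \<in> {a..b}"
      then have "ennreal (h z) = 0" using z by simp
      then show False using hp[of z] by (simp add: ennreal_eq_0_iff)
    qed
  qed
  then have "emeasure lborel {a..b} = 0"
    by (subst (asm) AE_iff_measurable[of "{a..b}"]) auto
  then show False using ab by simp
qed

lemma H_cont:
  fixes h H :: "real \<Rightarrow> real"
  assumes int: "\<And>a b. h integrable_on {a..b}"
  and Hd: "\<And>a b. a \<le> b \<Longrightarrow> H b - H a = integral {a..b} h"
  shows "isCont H t"
proof -
  have "continuous_on {t-1..t+1} (\<lambda>x. H (t-1) + integral {t-1..x} h)"
    by (intro continuous_intros indefinite_integral_continuous_1 int)
  then have "continuous_on {t-1..t+1} H"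
  proof (rule continuous_on_eq)
    fix x assume "x \<in> {t-1..t+1}"
    then have "t - 1 \<le> x" by simp
    from Hd[OF this] show "H (t-1) + integral {t-1..x} h = H x" by simp
  qed
  moreover have "t \<in> interior {t-1..t+1}" by simp
  ultimately show ?thesis by (rule continuous_on_interior)
qed

lemma antideriv:
  fixes H :: "real \<Rightarrow> real"
  assumes "\<And>t. isCont H t"
  shows "\<exists>Q. \<forall>t. (Q has_real_derivative H t) (at t)"
proof -
  have "\<exists>F. \<forall>x::real. -\<infinity> < ereal x \<longrightarrow> ereal x < \<infinity> \<longrightarrow> (F has_vector_derivative H x) (at x)"
    by (rule einterval_antiderivative) (simp_all add: assms)
  then obtain F where F: "\<forall>x::real. -\<infinity> < ereal x \<longrightarrow> ereal x < \<infinity> \<longrightarrow> (F has_vector_derivative H x) (at x)"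
    by blast
  have "\<forall>t. (F has_real_derivative H t) (at t)"
  proof
    fix t
    have "(F has_vector_derivative H t) (at t)" using F by simp
    then show "(F has_real_derivative H t) (at t)" by (simp add: has_real_derivative_iff_has_vector_derivative)
  qed
  then show ?thesis by blast
qed

lemma qfun_rep:
  fixes \<eta> H Q :: "real \<Rightarrow> real"
  assumes int: "\<And>a b. (\<lambda>z. 2 / (\<eta> z)\<^sup>2) integrable_on {a..b}"
  and Hd: "\<And>a b. a \<le> b \<Longrightarrow> H b - H a = integral {a..b} (\<lambda>z. 2 / (\<eta> z)\<^sup>2)"
  and Hmono: "\<And>s t. s < t \<Longrightarrow> H s < H t"
  and Hc: "\<And>t. isCont H t"
  and QH: "\<And>t. (Q has_real_derivative H t) (at t)"
  shows "qfun \<eta> y x = ennreal (Dq Q H y x)"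
proof -
  have inner: "(\<integral>\<^sup>+ z\<in>{min y u..max y u}. ennreal (2 / (\<eta> z)\<^sup>2) \<partial>lborel) = ennreal \<bar>H u - H y\<bar>" for u
  proof -
    have "(\<integral>\<^sup>+ z\<in>{min y u..max y u}. ennreal (2 / (\<eta> z)\<^sup>2) \<partial>lborel)
        = ennreal (integral {min y u..max y u} (\<lambda>z. 2 / (\<eta> z)\<^sup>2))"
      by (rule nnI[OF int]) simp
    also have "integral {min y u..max y u} (\<lambda>z. 2 / (\<eta> z)\<^sup>2) = \<bar>H u - H y\<bar>"
      using Hd[of "min y u" "max y u"] Hmono[of y u] Hmono[of u y]
      by (cases "y < u"; cases "u < y") (auto simp: min_def max_def)
    finally show ?thesis .
  qed
  have cK: "continuous_on {min y x..max y x} (\<lambda>u. \<bar>H u - H y\<bar>)"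
    by (intro continuous_intros continuous_at_imp_continuous_on) (use Hc in auto)
  have "qfun \<eta> y x = (\<integral>\<^sup>+ u\<in>{min y x..max y x}. ennreal \<bar>H u - H y\<bar> \<partial>lborel)"
    unfolding qfun_def by (simp add: inner)
  also have "\<dots> = ennreal (integral {min y x..max y x} (\<lambda>u. \<bar>H u - H y\<bar>))"
    by (rule nnI[OF integrable_continuous_interval[OF cK]]) simp
  also have "integral {min y x..max y x} (\<lambda>u. \<bar>H u - H y\<bar>) = Dq Q H y x"
  proof (cases "y \<le> x")
    case True
    have "((\<lambda>u. H u - H y) has_integral ((Q x - H y * x) - (Q y - H y * y))) {y..x}"
      by (rule fundamental_theorem_of_calculus[OF True])
         (auto simp: has_real_derivative_iff_has_vector_derivative[symmetric]
               intro!: derivative_eq_intros QH[THEN DERIV_subset])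
    moreover have "integral {y..x} (\<lambda>u. \<bar>H u - H y\<bar>) = integral {y..x} (\<lambda>u. H u - H y)"
      by (rule integral_cong) (use Hmono in \<open>force simp: le_less\<close>)
    ultimately show ?thesis using True by (simp add: integral_unique Dq_def algebra_simps)
  next
    case False
    then have xy: "x \<le> y" by simp
    have "((\<lambda>u. H y - H u) has_integral ((H y * y - Q y) - (H y * x - Q x))) {x..y}"
      by (rule fundamental_theorem_of_calculus[OF xy])
         (auto simp: has_real_derivative_iff_has_vector_derivative[symmetric]
               intro!: derivative_eq_intros QH[THEN DERIV_subset])
    moreover have "integral {x..y} (\<lambda>u. \<bar>H u - H y\<bar>) = integral {x..y} (\<lambda>u. H y - H u)"
      by (rule integral_cong) (use Hmono in \<open>force simp: le_less\<close>)
    ultimately show ?thesis using xy by (simp add: integral_unique Dq_def algebra_simps min_def max_def)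
  qed
  finally show ?thesis .
qed


theorem mainTheorem3:
  fixes \<eta> :: "real \<Rightarrow> real" and \<mu> :: "real measure"
  assumes eta_borel: "\<eta> \<in> borel_measurable borel"
    and eta_nz: "\<And>z. \<eta> z \<noteq> 0"
    and eta_loc: "\<And>a b. set_integrable lborel {a..b} (\<lambda>z. 1 / (\<eta> z)\<^sup>2)"
    and mu_prob: "prob_space \<mu>"
    and mu_sets: "sets \<mu> = sets borel"
    and mu_int: "integrable \<mu> (\<lambda>x. x)"
    and mu_centered: "(\<integral>x. x \<partial>\<mu>) = 0"
    and mu_nondirac: "\<mu> \<noteq> return borel 0"
    and y0: "\<exists>y0. \<forall>a>0. Gfun \<eta> \<mu> y0 a < \<infinity>"
  shows "\<forall>y. bij_betw (Gfun \<eta> \<mu> y) {0::real..} {x::ennreal. x < \<infinity>}"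
proof -
  define h where "h = (\<lambda>z. 2 / (\<eta> z)\<^sup>2)"
  have int: "\<And>a b. h integrable_on {a..b}" unfolding h_def by (rule h_int[OF eta_loc])
  define H where "H \<equiv> \<lambda>t. if 0 \<le> t then integral {0..t} h else - integral {t..0} h"
  have Hd: "\<And>a b. a \<le> b \<Longrightarrow> H b - H a = integral {a..b} h"
    unfolding H_def by (rule H_diff[OF int])
  have [measurable]: "\<eta> \<in> borel_measurable borel" by (rule eta_borel)
  have hm: "h \<in> borel_measurable borel" unfolding h_def by measurable
  have hp: "\<And>z. 0 < h z" unfolding h_def using eta_nz by simp
  have Hmono: "\<And>s t. s < t \<Longrightarrow> H s < H t"
    using Hd int_pos[OF hm hp int] by (metis diff_gt_0_iff_gt less_imp_le)
  have Hc: "\<And>t. isCont H t" by (rule H_cont[OF int Hd])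
  obtain Q where QH: "\<And>t. (Q has_real_derivative H t) (at t)"
    using antideriv[OF Hc] by blast
  have rep: "\<And>y x. qfun \<eta> y x = ennreal (Dq Q H y x)"
    by (rule qfun_rep[OF int[unfolded h_def] Hd[unfolded h_def] Hmono Hc QH])
  have GG: "\<And>y. Gfun \<eta> \<mu> y = Gq Q H \<mu> y"
    by (rule ext) (simp add: Gfun_def Gq_def rep)
  obtain y0 where "\<forall>a>0. Gfun \<eta> \<mu> y0 a < \<infinity>" using y0 by blast
  then have y0': "\<forall>a>0. Gq Q H \<mu> y0 a < \<infinity>" by (simp add: GG)
  show ?thesis
    unfolding GG using Gq_bij[OF QH Hmono mu_prob mu_sets mu_int mu_nondirac y0'] by blast
qed

end
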